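(* Let $d\in\{2,3\}$ and let $K\subset M^{m\times n}$ be a $d$-dimensional subspace without Rank-$1$ connections, with $K=P_K(\mathbb{R}^d)$ where $P_K(z)=(a_{ij}\cdot z)_{ij}$, $a_{ij}\in\mathbb{R}^d$, is a linear isomorphism onto $K$. If $\dim\mathrm{Span}\{a_{i_0l}:l=1,\dots,n\}=2$ for some $i_0$, or $\dim\mathrm{Span}\{a_{lj_0}:l=1,\dots,m\}=2$ for some $j_0$, then there exists $\beta\in\mathbb{R}^{q_0}\setminus\{0\}$ with $\sum_{k=1}^{q_0}\beta_kM_k(X)\ge0$ for all $X\in K$ and $\sum_k\beta_kM_k\not\equiv0$ on $K$, where $M_1,\dots,M_{q_0}$ are all the $2\times2$ minors of $m\times n$ matrices.
   Context: A set has Rank-$1$ connections if it contains $A\ne B$ with $\mathrm{Rank}(A-B)=1$. *)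

theory Defs
  imports "HOL-Analysis.Analysis"
begin

definition has_rank1_connections :: "(real^'n^'m) set \<Rightarrow> bool" where
  "has_rank1_connections K \<longleftrightarrow> (\<exists>A\<in>K. \<exists>B\<in>K. A \<noteq> B \<and> rank (A - B) = 1)"

definition minor_idx :: "('m::{finite,linorder} \<times> 'm \<times> 'n::{finite,linorder} \<times> 'n) set" where
  "minor_idx = {(i1, i2, j1, j2). i1 < i2 \<and> j1 < j2}"

definition minor2 :: "real^'n^'m \<Rightarrow> ('m \<times> 'm \<times> 'n \<times> 'n) \<Rightarrow> real" where
  "minor2 X q = (case q of (i1, i2, j1, j2) \<Rightarrow>
      X $ i1 $ j1 * X $ i2 $ j2 - X $ i1 $ j2 * X $ i2 $ j1)"

definition PK :: "('m \<Rightarrow> 'n \<Rightarrow> real^'d) \<Rightarrow> real^'d \<Rightarrow> real^'n^'m" where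
  "PK a z = (\<chi> i j. a i j \<bullet> z)"

end

theory Submission
  imports Defs
begin



lemma rank_le1_rows:
  fixes X :: "real^'n^'m"
  assumes "\<forall>i. \<exists>c. \<forall>j. X$i$j = c * r$j"
  shows "rank X \<le> 1"
proof -
  have "rows X \<subseteq> span {r}"
  proof
    fix x assume "x \<in> rows X"
    then obtain i where x: "x = X$i" by (auto simp: rows_def row_def)
    obtain c where "\<forall>j. X$i$j = c * r$j" using assms by blast
    then have "x = c *\<^sub>R r" by (simp add: x vec_eq_iff)
    then show "x \<in> span {r}" by (simp add: span_base span_mul)
  qed
  then have "dim (rows X) \<le> card {r}" by (intro dim_le_card) auto
  then show ?thesis by (simp add: row_rank_def)
qed

lemma absmul_bounds:
  fixes b x :: real assumes "x \<ge> 0"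
  shows "-\<bar>b\<bar>*x \<le> b*x" "b*x \<le> \<bar>b\<bar>*x"
proof -
  have "\<bar>b*x\<bar> = \<bar>b\<bar>*x" using assms by (simp add: abs_mult)
  moreover have "-\<bar>b*x\<bar> \<le> b*x" "b*x \<le> \<bar>b*x\<bar>" by simp_all
  ultimately show "-\<bar>b\<bar>*x \<le> b*x" "b*x \<le> \<bar>b\<bar>*x" by simp_all
qed

lemma cubic_root:
  fixes c3 c2 c1 c0 :: real
  assumes "c3 \<noteq> 0"
  shows "\<exists>t. c3*t^3 + c2*t^2 + c1*t + c0 = 0"
proof -
  define b where "b = c2/c3"
  define c where "c = c1/c3"
  define d where "d = c0/c3"
  define f where "f = (\<lambda>t::real. t^3 + b*t^2 + c*t + d)"
  define T where "T = 1 + \<bar>b\<bar> + \<bar>c\<bar> + \<bar>d\<bar>"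
  have T1: "T \<ge> 1" by (simp add: T_def)
  have "f T \<ge> T^2*(T - \<bar>b\<bar> - \<bar>c\<bar> - \<bar>d\<bar>)"
  proof -
    have "b*T^2 \<ge> -\<bar>b\<bar>*T^2" by (rule absmul_bounds) simp
    moreover have "c*T \<ge> -\<bar>c\<bar>*T^2"
    proof -
      have "\<bar>c\<bar>*T \<le> \<bar>c\<bar>*T^2" using T1 by (simp add: mult_left_mono power2_eq_square)
      moreover have "-\<bar>c\<bar>*T \<le> c*T" using T1 by (intro absmul_bounds) simp
      ultimately show ?thesis by linarith
    qed
    moreover have "d \<ge> -\<bar>d\<bar>*T^2"
    proof -
      have "\<bar>d\<bar> \<le> \<bar>d\<bar>*T^2" using T1 by (simp add: mult_le_cancel_left1 one_le_power)
      then show ?thesis by linarith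
    qed
    ultimately show ?thesis by (simp add: f_def power3_eq_cube power2_eq_square algebra_simps)
  qed
  moreover have "T - \<bar>b\<bar> - \<bar>c\<bar> - \<bar>d\<bar> = 1" by (simp add: T_def)
  ultimately have "T^2 \<le> f T" by simp
  then have fT: "f T \<ge> 0" by (meson order_trans zero_le_power2)
  have "f (-T) \<le> -(T^2*(T - \<bar>b\<bar> - \<bar>c\<bar> - \<bar>d\<bar>))"
  proof -
    have "b*T^2 \<le> \<bar>b\<bar>*T^2" by (rule absmul_bounds) simp
    moreover have "-c*T \<le> \<bar>c\<bar>*T^2"
    proof -
      have "\<bar>c\<bar>*T \<le> \<bar>c\<bar>*T^2" using T1 by (simp add: mult_left_mono power2_eq_square)
      moreover have "-c*T \<le> \<bar>c\<bar>*T" using absmul_bounds(1)[of T c] T1 by simp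
      ultimately show ?thesis by linarith
    qed
    moreover have "d \<le> \<bar>d\<bar>*T^2"
    proof -
      have "\<bar>d\<bar> \<le> \<bar>d\<bar>*T^2" using T1 by (simp add: mult_le_cancel_left1 one_le_power)
      then show ?thesis by linarith
    qed
    ultimately show ?thesis by (simp add: f_def power3_eq_cube power2_eq_square algebra_simps)
  qed
  then have "f (-T) \<le> - (T^2)" using \<open>T - \<bar>b\<bar> - \<bar>c\<bar> - \<bar>d\<bar> = 1\<close> by simp
  then have fmT: "f (-T) \<le> 0" by (meson order_trans zero_le_power2 neg_le_0_iff_le)
  have "\<exists>x\<ge>-T. x \<le> T \<and> f x = 0"
    using fmT fT T1 by (intro IVT) (auto simp: f_def)
  then obtain t where "f t = 0" by blast
  then have "c3 * f t = 0" by simp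
  then have "c3*t^3 + c2*t^2 + c1*t + c0 = 0"
    using assms by (simp add: f_def b_def c_def d_def algebra_simps)
  then show ?thesis by blast
qed



lemma solve_E:
  fixes y h p q :: "'r \<Rightarrow> real"
  assumes Rl: "\<And>i i'. p i * q i' - q i * p i' = y i * h i' - h i * y i'"
  shows "\<exists>t s u. (t \<noteq> 0 \<or> s \<noteq> 0) \<and> (\<forall>i. y i*(s^2 - t^2) + h i*t * s + u*(s*p i - t*q i) = 0)"
proof (cases "\<forall>i i'. y i * h i' = h i * y i'")
  case True
  show ?thesis
  proof (cases "\<forall>i. y i = 0")
    case True
    then show ?thesis by (intro exI[of _ 1] exI[of _ 0] exI[of _ 0]) simp
  next
    case False
    then obtain k where yk: "y k \<noteq> 0" by blast
    define z where "z = h k / y k"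
    have hz: "h i = z * y i" for i
      using True[rule_format, of k i] yk by (simp add: z_def field_simps)
    define t where "t = (z + sqrt (z^2 + 4))/2"
    have sq: "(sqrt (z^2+4))^2 = z^2 + 4" by simp
    have tt: "1 - t^2 + z*t = 0"
      unfolding t_def using sq by (simp add: power2_eq_square field_simps)
    have "\<forall>i. y i*(1^2 - t^2) + h i*t * 1 + 0*(1*p i - t*q i) = 0"
    proof
      fix i
      have "y i*(1^2 - t^2) + h i*t * 1 + 0*(1*p i - t*q i) = y i * (1 - t^2 + z*t)"
        by (simp add: hz algebra_simps)
      then show "y i*(1^2 - t^2) + h i*t * 1 + 0*(1*p i - t*q i) = 0" using tt by simp
    qed
    then show ?thesis by (intro exI[of _ t] exI[of _ 1] exI[of _ 0]) simp
  qed
next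
  case False
  then obtain k k' where kk: "y k * h k' \<noteq> h k * y k'" by blast
  define \<delta> where "\<delta> = y k * h k' - h k * y k'"
  have d0: "\<delta> \<noteq> 0" using kk by (simp add: \<delta>_def)
  have dpq: "\<delta> = p k * q k' - q k * p k'" using Rl[of k k'] by (simp add: \<delta>_def)
  define aY where "aY = (y k * q k' - y k' * q k)/\<delta>"
  define bY where "bY = (p k * y k' - p k' * y k)/\<delta>"
  define aH where "aH = (h k * q k' - h k' * q k)/\<delta>"
  define bH where "bH = (p k * h k' - p k' * h k)/\<delta>"
  have yrep: "y i = aY * p i + bY * q i" for i
  proof -
    have "\<delta> * y i = (y k * q k' - y k' * q k) * p i + (p k * y k' - p k' * y k) * q i"
      using Rl[of k' i] Rl[of k i] unfolding \<delta>_def by algebra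
    then have eq: "(y k * q k' - y k' * q k) * p i + (p k * y k' - p k' * y k) * q i = \<delta> * y i" by simp
    have "aY * p i + bY * q i = ((y k * q k' - y k' * q k) * p i + (p k * y k' - p k' * y k) * q i)/\<delta>" by (simp add: aY_def bY_def add_divide_distrib)
    also have "\<dots> = (\<delta> * y i)/\<delta>" by (simp only: eq)
    also have "\<dots> = y i" using d0 by simp
    finally show ?thesis by simp
  qed
  have hrep: "h i = aH * p i + bH * q i" for i
  proof -
    have "\<delta> * h i = (h k * q k' - h k' * q k) * p i + (p k * h k' - p k' * h k) * q i"
      using Rl[of k' i] Rl[of k i] unfolding \<delta>_def by algebra
    then have eq: "(h k * q k' - h k' * q k) * p i + (p k * h k' - p k' * h k) * q i = \<delta> * h i" by simp
    have "aH * p i + bH * q i = ((h k * q k' - h k' * q k) * p i + (p k * h k' - p k' * h k) * q i)/\<delta>" by (simp add: aH_def bH_def add_divide_distrib)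
    also have "\<dots> = (\<delta> * h i)/\<delta>" by (simp only: eq)
    also have "\<dots> = h i" using d0 by simp
    finally show ?thesis by simp
  qed
  show ?thesis
  proof (cases "aY = 0")
    case True
    have "\<forall>i. y i*(0^2 - 1^2) + h i*1 * 0 + (-bY)*(0*p i - 1*q i) = 0"
      using True by (simp add: yrep)
    then show ?thesis by (intro exI[of _ 1] exI[of _ 0] exI[of _ "-bY"]) simp
  next
    case False
    obtain t where t: "(-aY)*t^3 + (aH - bY)*t^2 + (aY + bH)*t + bY = 0"
      using cubic_root[of "-aY" "aH - bY" "aY + bH" bY] False by auto
    define u where "u = -((1 - t^2)*aY + t*aH)"
    have "\<forall>i. y i*(1^2 - t^2) + h i*t * 1 + u*(1*p i - t*q i) = 0"
    proof
      fix i
      have "y i*(1^2 - t^2) + h i*t * 1 + u*(1*p i - t*q i)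
          = q i * ((-aY)*t^3 + (aH - bY)*t^2 + (aY + bH)*t + bY)"
        by (simp add: yrep hrep u_def power2_eq_square power3_eq_cube algebra_simps)
      then show "y i*(1^2 - t^2) + h i*t * 1 + u*(1*p i - t*q i) = 0" using t by simp
    qed
    then show ?thesis by (intro exI[of _ t] exI[of _ 1] exI[of _ u]) simp
  qed
qed


lemma alg_main:
  fixes A B C :: "'r \<Rightarrow> 'c \<Rightarrow> real"
  assumes H: "\<And>i i' j j'. A i j*A i' j' + B i j*B i' j' + C i j*C i' j'
                 = A i j'*A i' j + B i j'*B i' j + C i j'*C i' j"
    and H0: "\<And>j. C i0 j = 0"
    and HD: "A i0 j1 * B i0 j2 - A i0 j2 * B i0 j1 \<noteq> 0"
  shows "\<exists>t s u. (\<exists>i j. t*A i j + s*B i j + u*C i j \<noteq> 0) \<and>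
                 (\<exists>r. \<forall>i. \<exists>c. \<forall>j. t*A i j + s*B i j + u*C i j = c * r j)"
proof -
  define a where "a = (\<lambda>j. A i0 j)"
  define b where "b = (\<lambda>j. B i0 j)"
  define D where "D = a j1 * b j2 - a j2 * b j1"
  have D0: "D \<noteq> 0" using HD by (simp add: D_def a_def b_def)
  have I: "a j * A i j' + b j * B i j' = a j' * A i j + b j' * B i j" for i j j'
    using H[of i0 j i j'] H0 by (simp add: a_def b_def mult.commute)
  define x where "x = (\<lambda>i. (b j2 * A i j1 - b j1 * A i j2)/D)"
  define y where "y = (\<lambda>i. (b j2 * B i j1 - b j1 * B i j2)/D)"
  define w where "w = (\<lambda>i. (a j1 * B i j2 - a j2 * B i j1)/D)"
  have formA: "A i j = x i * a j + y i * b j" for i j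
  proof -
    have "D * A i j = (b j2 * A i j1 - b j1 * A i j2) * a j + (b j2 * B i j1 - b j1 * B i j2) * b j"
      using I[of j i j1] I[of j i j2] unfolding D_def by algebra
    then have "A i j = ((b j2 * A i j1 - b j1 * A i j2) * a j + (b j2 * B i j1 - b j1 * B i j2) * b j)/D"
      using D0 by (simp add: eq_divide_eq mult.commute)
    then show ?thesis by (simp add: x_def y_def add_divide_distrib)
  qed
  have formB: "B i j = y i * a j + w i * b j" for i j
  proof -
    have "D * B i j = (b j2 * B i j1 - b j1 * B i j2) * a j + (a j1 * B i j2 - a j2 * B i j1) * b j"
      using I[of j i j1] I[of j i j2] I[of j1 i j2] unfolding D_def by algebra
    then have "B i j = ((b j2 * B i j1 - b j1 * B i j2) * a j + (a j1 * B i j2 - a j2 * B i j1) * b j)/D"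
      using D0 by (simp add: eq_divide_eq mult.commute)
    then show ?thesis by (simp add: w_def y_def add_divide_distrib)
  qed
  define h where "h = (\<lambda>i. x i - w i)"
  define \<kappa> where "\<kappa> = (\<lambda>i i'. y i * h i' - h i * y i')"
  have Cmin: "C i j*C i' j' - C i j'*C i' j = \<kappa> i i' * (a j * b j' - a j' * b j)" for i i' j j'
  proof -
    have "A i j*A i' j' + B i j*B i' j' + C i j*C i' j'
                 = A i j'*A i' j + B i j'*B i' j + C i j'*C i' j" by (rule H)
    then have "(x i * a j + y i * b j)*(x i' * a j' + y i' * b j') + (y i * a j + w i * b j)*(y i' * a j' + w i' * b j') + C i j*C i' j'
        = (x i * a j' + y i * b j')*(x i' * a j + y i' * b j) + (y i * a j' + w i * b j')*(y i' * a j + w i' * b j) + C i j'*C i' j"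
      by (simp only: formA formB)
    then show ?thesis unfolding \<kappa>_def h_def by algebra
  qed
  define p where "p = (\<lambda>i. (b j2 * C i j1 - b j1 * C i j2)/D)"
  define q where "q = (\<lambda>i. (a j1 * C i j2 - a j2 * C i j1)/D)"
  define R where "R = (\<lambda>i j. C i j - p i * a j - q i * b j)"
  have Rid: "R i j * C i' j' = R i' j * C i j'" for i i' j j'
  proof -
    have DR: "D * R i j = D * C i j - (a j * b j2 - a j2 * b j) * C i j1 - (a j1 * b j - a j * b j1) * C i j2" for i
    proof -
      have "D * p i = b j2 * C i j1 - b j1 * C i j2" "D * q i = a j1 * C i j2 - a j2 * C i j1"
        using D0 by (simp_all add: p_def q_def)
      then show ?thesis unfolding R_def D_def by algebra
    qed
    have "D * (R i j * C i' j' - R i' j * C i j') =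
       D * (C i j*C i' j' - C i j'*C i' j) - (a j * b j2 - a j2 * b j) * (C i j1*C i' j' - C i j'*C i' j1)
        - (a j1 * b j - a j * b j1) * (C i j2*C i' j' - C i j'*C i' j2)"
      using DR[of i] DR[of i'] by algebra
    also have "\<dots> = 0"
      unfolding Cmin D_def by algebra
    finally show ?thesis using D0 by simp
  qed
  show ?thesis
  proof (cases "\<exists>i j. R i j \<noteq> 0")
    case True
    then obtain i1 js where Rs: "R i1 js \<noteq> 0" by blast
    have Cnz: "\<exists>i j. C i j \<noteq> 0"
    proof (rule ccontr)
      assume "\<not> (\<exists>i j. C i j \<noteq> 0)"
      then have "R i1 js = 0" by (simp add: R_def p_def q_def)
      then show False using Rs by simp
    qed
    have "\<forall>i. \<exists>c. \<forall>j. 0*A i j + 0*B i j + 1*C i j = c * C i1 j"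
    proof
      fix i
      show "\<exists>c. \<forall>j. 0*A i j + 0*B i j + 1*C i j = c * C i1 j"
      proof (intro exI allI)
        fix j
        have "R i1 js * C i j = R i js * C i1 j" by (rule Rid)
        then show "0*A i j + 0*B i j + 1*C i j = R i js / R i1 js * C i1 j"
          using Rs by (simp add: field_simps)
      qed
    qed
    then show ?thesis using Cnz by (intro exI[of _ 0] exI[of _ 0] exI[of _ 1]) auto
  next
    case False
    then have formC: "C i j = p i * a j + q i * b j" for i j by (simp add: R_def algebra_simps)
    have Rl: "p i * q i' - q i * p i' = y i * h i' - h i * y i'" for i i'
    proof -
      have "(p i * q i' - q i * p i') * D = \<kappa> i i' * D"
        using Cmin[of i j1 i' j2] unfolding formC D_def by algebra
      then show ?thesis using D0 by (simp add: \<kappa>_def)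
    qed
    obtain t s u where ts: "t \<noteq> 0 \<or> s \<noteq> 0"
      and E: "\<And>i. y i*(s^2 - t^2) + h i*t * s + u*(s*p i - t*q i) = 0"
      using solve_E[of p q y h, OF Rl] by blast
    define \<alpha> where "\<alpha> = (\<lambda>i. t * x i + s * y i + u * p i)"
    define \<gamma> where "\<gamma> = (\<lambda>i. t * y i + s * w i + u * q i)"
    have val: "t*A i j + s*B i j + u*C i j = \<alpha> i * a j + \<gamma> i * b j" for i j
      unfolding formA formB formC \<alpha>_def \<gamma>_def by (simp add: algebra_simps)
    have Eag: "\<alpha> i * s = \<gamma> i * t" for i
      using E[of i] unfolding \<alpha>_def \<gamma>_def h_def by (simp add: power2_eq_square algebra_simps)
    have val0: "t*A i0 j + s*B i0 j + u*C i0 j = t * a j + s * b j" for j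
      using H0 by (simp add: a_def b_def)
    have nz: "\<exists>i j. t*A i j + s*B i j + u*C i j \<noteq> 0"
    proof (rule ccontr)
      assume "\<not> ?thesis"
      then have z1: "t * a j1 + s * b j1 = 0" and z2: "t * a j2 + s * b j2 = 0"
        using val0 by metis+
      have "t * D = 0" unfolding D_def using z1 z2 by algebra
      moreover have "s * D = 0" unfolding D_def using z1 z2 by algebra
      ultimately show False using D0 ts by simp
    qed
    have "\<forall>i. \<exists>c. \<forall>j. t*A i j + s*B i j + u*C i j = c * (t * a j + s * b j)"
    proof
      fix i
      show "\<exists>c. \<forall>j. t*A i j + s*B i j + u*C i j = c * (t * a j + s * b j)"
      proof (cases "t = 0")
        case False
        show ?thesis
        proof (intro exI allI)
          fix j
          have "\<gamma> i = \<alpha> i * s / t" using Eag[of i] False by (simp add: field_simps)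
          then have "\<alpha> i * a j + \<gamma> i * b j = \<alpha> i / t * (t * a j + s * b j)"
            using False by (simp add: field_simps)
          then show "t*A i j + s*B i j + u*C i j = \<alpha> i / t * (t * a j + s * b j)"
            by (simp only: val)
        qed
      next
        case True
        then have s0: "s \<noteq> 0" using ts by simp
        then have "\<alpha> i = 0" using Eag[of i] True by simp
        then show ?thesis
        proof (intro exI[of _ "\<gamma> i / s"] allI)
          fix j
          have "t*A i j + s*B i j + u*C i j = \<alpha> i * a j + \<gamma> i * b j" by (rule val)
          then show "t*A i j + s*B i j + u*C i j = \<gamma> i / s * (t * a j + s * b j)"
            using True s0 \<open>\<alpha> i = 0\<close> by simp
        qed
      qed
    qed
    then have "\<exists>r. \<forall>i. \<exists>c. \<forall>j. t*A i j + s*B i j + u*C i j = c * r j"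
      by (intro exI[of _ "\<lambda>j. t * a j + s * b j"])
    then show ?thesis using nz by blast
  qed
qed


lemma orthonormal_indep:
  fixes M :: "real^'d^'d"
  assumes "finite S"
    and n1: "\<And>x. x \<in> S \<Longrightarrow> x \<bullet> (M *v x) = 1"
    and o0: "\<And>x y. x \<in> S \<Longrightarrow> y \<in> S \<Longrightarrow> x \<noteq> y \<Longrightarrow> x \<bullet> (M *v y) = 0"
  shows "independent S"
  unfolding independent_explicit
proof (intro conjI allI impI ballI)
  show "finite S" by fact
  fix c v assume sum0: "(\<Sum>v\<in>S. c v *\<^sub>R v) = 0" and v: "v \<in> S"
  have "0 = (\<Sum>w\<in>S. c w *\<^sub>R w) \<bullet> (M *v v)" by (simp add: sum0)
  also have "\<dots> = (\<Sum>w\<in>S. c w * (w \<bullet> (M *v v)))" by (simp add: inner_sum_left)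
  also have "\<dots> = c v * (v \<bullet> (M *v v)) + (\<Sum>w\<in>S-{v}. c w * (w \<bullet> (M *v v)))"
    using v \<open>finite S\<close> by (simp add: sum.remove)
  also have "\<dots> = c v" using v n1 o0 by simp
  finally show "c v = 0" by simp
qed

lemma geo_main:
  fixes M :: "real^'d^'d" and a :: "'r \<Rightarrow> 'c \<Rightarrow> real^'d"
  assumes d: "CARD('d) = 2 \<or> CARD('d) = 3"
    and Msym: "\<And>x y. x \<bullet> (M *v y) = y \<bullet> (M *v x)"
    and Mpd: "\<And>x. x \<noteq> 0 \<Longrightarrow> x \<bullet> (M *v x) > 0"
    and G: "\<And>i i' j j'. a i j \<bullet> (M *v a i' j') = a i j' \<bullet> (M *v a i' j)"
    and span2: "dim (range (a i0)) = 2"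
  shows "\<exists>y. (\<exists>i j. a i j \<bullet> (M *v y) \<noteq> 0) \<and> (\<exists>r. \<forall>i. \<exists>c. \<forall>j. a i j \<bullet> (M *v y) = c * r j)"
proof -
  define g where "g = (\<lambda>x y. x \<bullet> (M *v y))"
  have gadd1: "g (x + x') y = g x y + g x' y" for x x' y by (simp add: g_def inner_add_left)
  have gsc1: "g (c *\<^sub>R x) y = c * g x y" for c x y by (simp add: g_def)
  have gsym: "g x y = g y x" for x y by (simp add: g_def Msym)
  have gdiff1: "g (x - x') y = g x y - g x' y" for x x' y by (simp add: g_def inner_diff_left)
  have gadd2: "g y (x + x') = g y x + g y x'" for x x' y using gadd1 gsym by metis
  have gsc2: "g y (c *\<^sub>R x) = c * g y x" for c x y using gsc1 gsym by metis
  have g0: "g 0 y = 0" "g y 0 = 0" for y by (simp_all add: g_def)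
  have gpos: "x \<noteq> 0 \<Longrightarrow> g x x > 0" for x using Mpd by (simp add: g_def)
  have gz: "g x x = 0 \<Longrightarrow> x = 0" for x using gpos by force
  have subsp: "subspace {y. g x y = 0}" for x
    unfolding subspace_def using gadd2 gsc2 g0 by auto
  have subsp1: "subspace {y. g y x = 0}" for x
    using subsp[of x] gsym by simp
  obtain Bs where Bs: "Bs \<subseteq> range (a i0)" "independent Bs" "range (a i0) \<subseteq> span Bs" "card Bs = dim (range (a i0))"
    by (rule basis_exists)
  then obtain u v where uv: "Bs = {u, v}" "u \<noteq> v" using span2 card_2_iff by metis
  then obtain j1 j2 where j1: "u = a i0 j1" and j2: "v = a i0 j2" using Bs(1) by blast
  have u0: "u \<noteq> 0" using Bs(2) uv dependent_zero by blast
  have vu: "v \<notin> span {u}"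
  proof -
    have "independent (insert v {u})" using Bs(2) uv by (simp add: insert_commute)
    then show ?thesis using uv(2) by (simp add: independent_insert)
  qed
  define n1 where "n1 = sqrt (g u u)"
  have guu: "g u u > 0" using gpos u0 .
  have n1p: "n1 > 0" using guu by (simp add: n1_def)
  have n1sq: "n1 * n1 = g u u" using guu by (simp add: n1_def)
  define e1 where "e1 = (1/n1) *\<^sub>R u"
  have ue1: "u = n1 *\<^sub>R e1" using n1p by (simp add: e1_def)
  have e1e1: "g e1 e1 = 1" using n1p n1sq guu by (simp add: e1_def gsc1 gsc2 field_simps)
  define c where "c = g v e1"
  define w where "w = v - c *\<^sub>R e1"
  have we1: "g w e1 = 0" by (simp add: w_def c_def gadd1 gsc1 e1e1 diff_conv_add_uminus flip: scaleR_minus_left)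
  have w0: "w \<noteq> 0"
  proof
    assume "w = 0"
    then have "v = (c/n1) *\<^sub>R u" by (simp add: w_def e1_def)
    then have "v \<in> span {u}" by (simp add: span_base span_mul)
    then show False using vu by simp
  qed
  define n2 where "n2 = sqrt (g w w)"
  have gww: "g w w > 0" using gpos w0 .
  have n2p: "n2 > 0" using gww by (simp add: n2_def)
  have n2sq: "n2 * n2 = g w w" using gww by (simp add: n2_def)
  define e2 where "e2 = (1/n2) *\<^sub>R w"
  have we2: "w = n2 *\<^sub>R e2" using n2p by (simp add: e2_def)
  have e2e2: "g e2 e2 = 1" using n2p n2sq gww by (simp add: e2_def gsc1 gsc2 field_simps)
  have e1e2: "g e1 e2 = 0" using we1 gsym by (simp add: e2_def gsc2)
  have ve: "v = n2 *\<^sub>R e2 + c *\<^sub>R e1" using we2 by (simp add: w_def algebra_simps)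
  have D: "g u e1 * g v e2 - g v e1 * g u e2 \<noteq> 0"
  proof -
    have "g u e1 = n1" using e1e1 by (simp add: ue1 gsc1)
    moreover have "g u e2 = 0" using e1e2 by (simp add: ue1 gsc1)
    moreover have "g v e2 = n2" using e2e2 e1e2 by (simp add: ve gadd1 gsc1)
    ultimately show ?thesis using n1p n2p by simp
  qed
  have e2e1: "g e2 e1 = 0" using e1e2 gsym by metis
  obtain e3 where e31: "g e3 e1 = 0" and e32: "g e3 e2 = 0" and e3n: "e3 = 0 \<or> g e3 e3 = 1"
    and spanE: "UNIV \<subseteq> span {e1, e2, e3}"
  proof (cases "CARD('d) = 2")
    case True
    have ne: "e1 \<noteq> e2" using e1e1 e1e2 by auto
    have "independent {e1, e2}"
      by (rule orthonormal_indep[of _ M]) (use e1e1 e2e2 e1e2 e2e1 in \<open>auto simp: g_def\<close>)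
    moreover have "dim (UNIV::(real^'d) set) \<le> card {e1, e2}" using True ne by simp
    ultimately have "UNIV \<subseteq> span {e1, e2}" by (intro card_ge_dim_independent) auto
    then have "UNIV \<subseteq> span {e1, e2, 0}" using span_mono[of "{e1,e2}" "{e1,e2,0}"] by auto
    then show ?thesis using that[of 0] g0 by auto
  next
    case False
    then have d3: "CARD('d) = 3" using d by simp
    have "dim {M *v e1, M *v e2} < DIM(real^'d)"
    proof -
      have "dim {M *v e1, M *v e2} \<le> card {M *v e1, M *v e2}" by (rule dim_le_card) (auto intro: span_base)
      also have "\<dots> \<le> 2" by (simp add: card_insert_le_m1)
      finally show ?thesis using d3 by simp
    qed
    then obtain z where z0: "z \<noteq> 0" and zo: "\<And>y. y \<in> span {M *v e1, M *v e2} \<Longrightarrow> orthogonal z y"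
      by (rule orthogonal_to_subspace_exists) blast
    have ze1: "g z e1 = 0" using zo[of "M *v e1"] by (simp add: span_base g_def orthogonal_def)
    have ze2: "g z e2 = 0" using zo[of "M *v e2"] by (simp add: span_base g_def orthogonal_def)
    define n3 where "n3 = sqrt (g z z)"
    have gzz: "g z z > 0" using gpos z0 .
    have n3p: "n3 > 0" using gzz by (simp add: n3_def)
    have n3sq: "n3 * n3 = g z z" using gzz by (simp add: n3_def)
    define e3 where "e3 = (1/n3) *\<^sub>R z"
    have e3e3: "g e3 e3 = 1" using n3p n3sq gzz by (simp add: e3_def gsc1 gsc2 field_simps)
    have e31: "g e3 e1 = 0" using ze1 by (simp add: e3_def gsc1)
    have e32: "g e3 e2 = 0" using ze2 by (simp add: e3_def gsc1)
    have ne: "e1 \<noteq> e2" "e1 \<noteq> e3" "e2 \<noteq> e3" using e1e1 e1e2 e31 e32 e3e3 by auto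
    have e13': "g e1 e3 = 0" "g e2 e3 = 0" using e31 e32 gsym by metis+
    have "independent {e1, e2, e3}"
      by (rule orthonormal_indep[of _ M]) (use e1e1 e2e2 e3e3 e1e2 e2e1 e31 e32 e13' in \<open>auto simp: g_def\<close>)
    moreover have "dim (UNIV::(real^'d) set) \<le> card {e1, e2, e3}" using d3 ne by simp
    ultimately have "UNIV \<subseteq> span {e1, e2, e3}" by (intro card_ge_dim_independent) auto
    then show ?thesis using that e31 e32 e3e3 by auto
  qed
  have e13: "g e1 e3 = 0" "g e2 e3 = 0" using e31 e32 gsym by metis+
  have expand: "x = g x e1 *\<^sub>R e1 + g x e2 *\<^sub>R e2 + g x e3 *\<^sub>R e3" for x
  proof -
    define r where "r = x - (g x e1 *\<^sub>R e1 + g x e2 *\<^sub>R e2 + g x e3 *\<^sub>R e3)"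
    have "g r e3 = 0"
    proof (cases "e3 = 0")
      case True then show ?thesis by (simp add: g0)
    next
      case False then have "g e3 e3 = 1" using e3n by simp
      then show ?thesis using e13 by (simp add: r_def gdiff1 gadd1 gsc1)
    qed
    moreover have "g r e1 = 0" "g r e2 = 0"
      using e1e1 e2e2 e1e2 e2e1 e31 e32 by (simp_all add: r_def gdiff1 gadd1 gsc1)
    ultimately have "{e1, e2, e3} \<subseteq> {y. g r y = 0}" by auto
    then have "span {e1, e2, e3} \<subseteq> {y. g r y = 0}" using subsp by (intro span_minimal) auto
    then have "g r r = 0" using spanE by auto
    then have "r = 0" by (rule gz)
    then show ?thesis by (simp add: r_def)
  qed
  have pars: "g x x' = g x e1 * g x' e1 + g x e2 * g x' e2 + g x e3 * g x' e3" for x x'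
  proof -
    have "g x x' = g (g x e1 *\<^sub>R e1 + g x e2 *\<^sub>R e2 + g x e3 *\<^sub>R e3) x'" by (rule arg_cong[OF expand[of x], of "\<lambda>z. g z x'"])
    also have "\<dots> = g x e1 * g e1 x' + g x e2 * g e2 x' + g x e3 * g e3 x'"
      by (simp add: gadd1 gsc1)
    also have "\<dots> = g x e1 * g x' e1 + g x e2 * g x' e2 + g x e3 * g x' e3"
      by (simp only: gsym[of e1 x'] gsym[of e2 x'] gsym[of e3 x'])
    finally show ?thesis .
  qed
  define A where "A = (\<lambda>i j. g (a i j) e1)"
  define B where "B = (\<lambda>i j. g (a i j) e2)"
  define C where "C = (\<lambda>i j. g (a i j) e3)"
  have H: "A i j*A i' j' + B i j*B i' j' + C i j*C i' j' = A i j'*A i' j + B i j'*B i' j + C i j'*C i' j"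
    for i i' j j'
  proof -
    have "g (a i j) (a i' j') = g (a i j') (a i' j)" using G by (simp add: g_def)
    then show ?thesis unfolding A_def B_def C_def using pars[of "a i j" "a i' j'"] pars[of "a i j'" "a i' j"] by simp
  qed
  have H0: "C i0 j = 0" for j
  proof -
    have "g u e3 = 0" using e13 by (simp add: ue1 gsc1)
    moreover have "g v e3 = 0" using e13 by (simp add: ve gadd1 gsc1)
    ultimately have "Bs \<subseteq> {y. g y e3 = 0}" using uv by auto
    then have "span Bs \<subseteq> {y. g y e3 = 0}" using subsp1 by (intro span_minimal) auto
    then show ?thesis using Bs(3) by (auto simp: C_def)
  qed
  have HD: "A i0 j1 * B i0 j2 - A i0 j2 * B i0 j1 \<noteq> 0"
    using D by (simp add: A_def B_def j1 j2)
  obtain t s u0 where nz: "\<exists>i j. t*A i j + s*B i j + u0*C i j \<noteq> 0"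
    and r1: "\<exists>r. \<forall>i. \<exists>c. \<forall>j. t*A i j + s*B i j + u0*C i j = c * r j"
    using alg_main[of A B C i0 j1 j2, OF H H0 HD] by blast
  define y where "y = t *\<^sub>R e1 + s *\<^sub>R e2 + u0 *\<^sub>R e3"
  have gy: "a i j \<bullet> (M *v y) = t*A i j + s*B i j + u0*C i j" for i j
  proof -
    have "a i j \<bullet> (M *v y) = g (a i j) y" by (simp add: g_def)
    then show ?thesis unfolding y_def A_def B_def C_def by (simp add: gadd2 gsc2)
  qed
  show ?thesis using nz r1 by (intro exI[of _ y]) (simp add: gy)
qed


definition outerp :: "real^'d \<Rightarrow> real^'d \<Rightarrow> real^'d^'d" where
  "outerp u w = (\<chi> \<alpha> \<beta>. u$\<alpha> * w$\<beta>)"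

lemma outerp_form: "z \<bullet> (outerp u w *v z) = (u \<bullet> z) * (w \<bullet> z)"
  apply (simp add: outerp_def inner_vec_def matrix_vector_mult_def sum_distrib_left sum_distrib_right
      mult.assoc mult.left_commute)
  apply (subst sum.swap)
  apply (simp add: mult.assoc mult.left_commute)
  done

lemma outerp_inner: "L \<bullet> outerp u w = u \<bullet> (L *v w)"
  by (simp add: outerp_def inner_vec_def matrix_vector_mult_def sum_distrib_left
      mult.assoc mult.left_commute)

lemma outerp_pair: "outerp u w \<bullet> outerp z z = (u \<bullet> z) * (w \<bullet> z)"
  by (simp add: outerp_inner outerp_form)

lemma vmul_form: "x \<bullet> (y v* L) = y \<bullet> (L *v (x::real^'d))"
  by (metis dot_lmul_matrix inner_commute)

lemma transpose_form: "x \<bullet> (transpose L *v y) = y \<bullet> (L *v (x::real^'d))"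
proof -
  have "x \<bullet> (transpose L *v y) = x \<bullet> (y v* L)" by simp
  also have "\<dots> = (y v* L) \<bullet> x" by (rule inner_commute)
  also have "\<dots> = y \<bullet> (L *v x)" by (rule dot_lmul_matrix)
  finally show ?thesis .
qed

lemma span_image_repr:
  fixes S :: "'q \<Rightarrow> 'v::real_vector"
  assumes "finite I" "x \<in> span (S ` I)"
  shows "\<exists>\<beta>. x = (\<Sum>q\<in>I. \<beta> q *\<^sub>R S q)"
proof -
  have "span (S ` I) \<subseteq> {x. \<exists>\<beta>. x = (\<Sum>q\<in>I. \<beta> q *\<^sub>R S q)}"
  proof (rule span_minimal)
    show "S ` I \<subseteq> {x. \<exists>\<beta>. x = (\<Sum>q\<in>I. \<beta> q *\<^sub>R S q)}"
    proof
      fix x assume "x \<in> S ` I"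
      then obtain q where q: "q \<in> I" "x = S q" by blast
      have "(\<Sum>q'\<in>I. (if q' = q then 1 else 0) *\<^sub>R S q') = S q"
        using q assms(1) by (simp add: if_distrib[of "\<lambda>c. c *\<^sub>R _"] sum.delta' cong: if_cong)
      then show "x \<in> {x. \<exists>\<beta>. x = (\<Sum>q\<in>I. \<beta> q *\<^sub>R S q)}" using q by (auto intro!: exI[of _ "\<lambda>q'. if q' = q then 1 else 0"])
    qed
    show "subspace {x. \<exists>\<beta>. x = (\<Sum>q\<in>I. \<beta> q *\<^sub>R S q)}"
      unfolding subspace_def
    proof (intro conjI ballI allI)
      show "0 \<in> {x. \<exists>\<beta>. x = (\<Sum>q\<in>I. \<beta> q *\<^sub>R S q)}" by (auto intro!: exI[of _ "\<lambda>_. 0"])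
    next
      fix x y assume "x \<in> {x. \<exists>\<beta>. x = (\<Sum>q\<in>I. \<beta> q *\<^sub>R S q)}" "y \<in> {x. \<exists>\<beta>. x = (\<Sum>q\<in>I. \<beta> q *\<^sub>R S q)}"
      then obtain b1 b2 where "x = (\<Sum>q\<in>I. b1 q *\<^sub>R S q)" "y = (\<Sum>q\<in>I. b2 q *\<^sub>R S q)" by blast
      then have xy: "x + y = (\<Sum>q\<in>I. (b1 q + b2 q) *\<^sub>R S q)" by (simp add: sum.distrib scaleR_add_left)
      show "x + y \<in> {x. \<exists>\<beta>. x = (\<Sum>q\<in>I. \<beta> q *\<^sub>R S q)}"
        apply (rule CollectI)
        apply (rule exI[of _ "\<lambda>q. b1 q + b2 q"])
        using xy by simp
    next
      fix c x assume "x \<in> {x. \<exists>\<beta>. x = (\<Sum>q\<in>I. \<beta> q *\<^sub>R S q)}"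
      then obtain b1 where "x = (\<Sum>q\<in>I. b1 q *\<^sub>R S q)" by blast
      then have cx: "c *\<^sub>R x = (\<Sum>q\<in>I. (c * b1 q) *\<^sub>R S q)" by (simp add: scaleR_sum_right)
      show "c *\<^sub>R x \<in> {x. \<exists>\<beta>. x = (\<Sum>q\<in>I. \<beta> q *\<^sub>R S q)}"
        apply (rule CollectI)
        apply (rule exI[of _ "\<lambda>q. c * b1 q"])
        using cx by simp
    qed
  qed
  then show ?thesis using assms(2) by blast
qed

theorem lemma6:
  fixes a :: "'m::{finite,linorder} \<Rightarrow> 'n::{finite,linorder} \<Rightarrow> real^'d"
    and K :: "(real^('n::{finite,linorder})^('m::{finite,linorder})) set"
  assumes d: "CARD('d) = 2 \<or> CARD('d) = 3"
    and sub: "subspace K" and dimK: "dim K = CARD('d)"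
    and K_def: "K = range (PK a)"
    and lin: "linear (PK a)" and inj: "inj (PK a)"
    and norank1: "\<not> has_rank1_connections K"
    and span2: "(\<exists>i0. dim (range (a i0)) = 2) \<or> (\<exists>j0. dim (range (\<lambda>l. a l j0)) = 2)"
  shows "\<exists>\<beta> :: ('m \<times> 'm \<times> 'n \<times> 'n) \<Rightarrow> real.
           (\<exists>q\<in>minor_idx. \<beta> q \<noteq> 0) \<and>
           (\<forall>X\<in>K. (\<Sum>q\<in>minor_idx. \<beta> q * minor2 X q) \<ge> 0) \<and>
           (\<exists>X\<in>K. (\<Sum>q\<in>minor_idx. \<beta> q * minor2 X q) \<noteq> 0)"
proof (rule ccontr)
  assume nb: "\<not> (\<exists>\<beta> :: ('m \<times> 'm \<times> 'n \<times> 'n) \<Rightarrow> real.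
           (\<exists>q\<in>minor_idx. \<beta> q \<noteq> 0) \<and>
           (\<forall>X\<in>K. (\<Sum>q\<in>minor_idx. \<beta> q * minor2 X q) \<ge> 0) \<and>
           (\<exists>X\<in>K. (\<Sum>q\<in>minor_idx. \<beta> q * minor2 X q) \<noteq> 0))"
  define Sq where "Sq = (\<lambda>q::('m \<times> 'm \<times> 'n \<times> 'n). case q of (i1,i2,j1,j2) \<Rightarrow>
      outerp (a i1 j1) (a i2 j2) + outerp (a i2 j2) (a i1 j1) - outerp (a i1 j2) (a i2 j1) - outerp (a i2 j1) (a i1 j2))"
  have PKc: "PK a z $ i $ j = a i j \<bullet> z" for z i j by (simp add: PK_def)
  have Sq_form: "Sq q \<bullet> outerp z z = 2 * minor2 (PK a z) q" for z q
  proof -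
    obtain i1 i2 j1 j2 where q: "q = (i1,i2,j1,j2)" by (cases q) auto
    show ?thesis
      by (simp add: q Sq_def minor2_def PKc inner_diff_left inner_add_left outerp_pair)
  qed
  have finI: "finite (minor_idx :: ('m \<times> 'm \<times> 'n \<times> 'n) set)" by (rule finite_subset[OF subset_UNIV]) simp
  define L where "L = span (Sq ` minor_idx)"
  define Gs where "Gs = (\<lambda>v. outerp v v) ` sphere (0::real^'d) 1"
  define T where "T = convex hull Gs"
  define P where "P = {x::real^'d^'d. (\<forall>z. 0 \<le> x \<bullet> outerp z z) \<and> (\<Sum>\<alpha>\<in>UNIV. x$\<alpha>$\<alpha>) = 1}"
  have TP: "T \<subseteq> P"
    unfolding T_def
  proof (rule hull_minimal)
    show "Gs \<subseteq> P"
    proof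
      fix x assume "x \<in> Gs"
      then obtain v where v: "norm v = 1" "x = outerp v v" by (auto simp: Gs_def)
      have "x \<bullet> outerp z z = (v \<bullet> z) * (v \<bullet> z)" for z
        by (simp add: v outerp_inner outerp_form)
      moreover have "(\<Sum>\<alpha>\<in>UNIV. x$\<alpha>$\<alpha>) = v \<bullet> v"
        by (simp add: v outerp_def inner_vec_def)
      moreover have "v \<bullet> v = 1" using v by (simp add: power2_norm_eq_inner[symmetric])
      ultimately show "x \<in> P" by (simp add: P_def)
    qed
    show "convex P"
      unfolding convex_def
    proof (intro ballI allI impI)
      fix x y :: "real^'d^'d" and u v :: real
      assume x: "x \<in> P" and y: "y \<in> P" and uv: "0 \<le> u" "0 \<le> v" "u + v = 1"
      have c1: "\<forall>z. 0 \<le> (u *\<^sub>R x + v *\<^sub>R y) \<bullet> outerp z z"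
        using x y uv by (simp add: P_def inner_add_left)
      have "(\<Sum>\<alpha>\<in>UNIV. (u *\<^sub>R x + v *\<^sub>R y)$\<alpha>$\<alpha>) = u * (\<Sum>\<alpha>\<in>UNIV. x$\<alpha>$\<alpha>) + v * (\<Sum>\<alpha>\<in>UNIV. y$\<alpha>$\<alpha>)"
        by (simp add: sum.distrib sum_distrib_left)
      then have c2: "(\<Sum>\<alpha>\<in>UNIV. (u *\<^sub>R x + v *\<^sub>R y)$\<alpha>$\<alpha>) = 1" using x y uv by (simp add: P_def)
      show "u *\<^sub>R x + v *\<^sub>R y \<in> P" using c1 c2 by (simp add: P_def)
    qed
  qed
  have disj: "L \<inter> T = {}"
  proof (rule ccontr)
    assume "L \<inter> T \<noteq> {}"
    then obtain x where xL: "x \<in> L" and xT: "x \<in> T" by blast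
    obtain \<beta> where xb: "x = (\<Sum>q\<in>minor_idx. \<beta> q *\<^sub>R Sq q)"
      using span_image_repr[OF finI] xL unfolding L_def by blast
    have form: "x \<bullet> outerp z z = (\<Sum>q\<in>minor_idx. (2 * \<beta> q) * minor2 (PK a z) q)" for z
      by (simp add: xb inner_sum_left Sq_form mult.assoc mult.left_commute)
    have xP: "x \<in> P" using xT TP by blast
    have nn: "\<forall>X\<in>K. (\<Sum>q\<in>minor_idx. (2 * \<beta> q) * minor2 X q) \<ge> 0"
    proof
      fix X assume "X \<in> K"
      then obtain z where Xz: "X = PK a z" using K_def by blast
      have "0 \<le> x \<bullet> outerp z z" using xP by (simp add: P_def)
      then show "(\<Sum>q\<in>minor_idx. (2 * \<beta> q) * minor2 X q) \<ge> 0"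
        using form[of z] Xz by simp
    qed
    have "\<exists>z. x \<bullet> outerp z z \<noteq> 0"
    proof (rule ccontr)
      assume "\<not> (\<exists>z. x \<bullet> outerp z z \<noteq> 0)"
      then have "x$\<alpha>$\<alpha> = 0" for \<alpha>
        using outerp_inner[of x "axis \<alpha> 1" "axis \<alpha> 1"]
        by (simp add: matrix_vector_mult_basis column_def inner_axis' inner_commute)
      then have "(\<Sum>\<alpha>\<in>UNIV. x$\<alpha>$\<alpha>) = 0" by simp
      then show False using xP by (simp add: P_def)
    qed
    then obtain z where "x \<bullet> outerp z z \<noteq> 0" by blast
    then have nz: "(\<Sum>q\<in>minor_idx. (2 * \<beta> q) * minor2 (PK a z) q) \<noteq> 0" using form by simp
    have e1: "\<exists>q\<in>minor_idx. 2 * \<beta> q \<noteq> 0"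
    proof (rule ccontr)
      assume "\<not> (\<exists>q\<in>minor_idx. 2 * \<beta> q \<noteq> 0)"
      then have "\<forall>q\<in>minor_idx. 2 * \<beta> q = 0" by blast
      then have "(\<Sum>q\<in>minor_idx. (2 * \<beta> q) * minor2 (PK a z) q) = 0" by simp
      then show False using nz by simp
    qed
    have e3: "\<exists>X\<in>K. (\<Sum>q\<in>minor_idx. (2 * \<beta> q) * minor2 X q) \<noteq> 0"
      using nz K_def by blast
    have "\<exists>\<beta>' :: ('m \<times> 'm \<times> 'n \<times> 'n) \<Rightarrow> real.
           (\<exists>q\<in>minor_idx. \<beta>' q \<noteq> 0) \<and>
           (\<forall>X\<in>K. (\<Sum>q\<in>minor_idx. \<beta>' q * minor2 X q) \<ge> 0) \<and>
           (\<exists>X\<in>K. (\<Sum>q\<in>minor_idx. \<beta>' q * minor2 X q) \<noteq> 0)"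
      apply (rule exI[of _ "\<lambda>q. 2 * \<beta> q"])
      using e1 nn e3 by simp
    then show False using nb by simp
  qed
  have cT: "compact T" unfolding T_def Gs_def
    by (intro compact_convex_hull compact_continuous_image compact_sphere)
      (unfold outerp_def, intro continuous_intros)
  have neT: "T \<noteq> {}"
  proof -
    obtain v :: "real^'d" where "norm v = 1" using vector_choose_size[of 1] by auto
    then have "outerp v v \<in> T" unfolding T_def Gs_def by (intro hull_inc) auto
    then show ?thesis by blast
  qed
  obtain \<Lambda> b where hL: "\<forall>x\<in>L. \<Lambda> \<bullet> x < b" and hT: "\<forall>x\<in>T. \<Lambda> \<bullet> x > b"
    using separating_hyperplane_closed_compact[of L T] disj cT neT convex_convex_hull[of Gs] T_def
    unfolding L_def by (auto simp: subspace_imp_convex)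
  have b0: "b > 0" using hL span_zero[of "Sq ` minor_idx"] unfolding L_def by force
  have L0: "\<Lambda> \<bullet> x = 0" if "x \<in> L" for x
  proof (rule ccontr)
    assume nz: "\<Lambda> \<bullet> x \<noteq> 0"
    have "((b + 1) / (\<Lambda> \<bullet> x)) *\<^sub>R x \<in> L" using that unfolding L_def by (simp add: span_mul)
    then have "\<Lambda> \<bullet> (((b + 1) / (\<Lambda> \<bullet> x)) *\<^sub>R x) < b" using hL by blast
    then show False using nz by simp
  qed
  have LSq: "\<Lambda> \<bullet> Sq q = 0" if "q \<in> minor_idx" for q
    using L0 that unfolding L_def by (simp add: span_base)
  have unitpos: "\<Lambda> \<bullet> outerp v v > 0" if "norm v = 1" for v
  proof -
    have "outerp v v \<in> T" unfolding T_def Gs_def using that by (intro hull_inc) auto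
    then show ?thesis using hT b0 by force
  qed
  define M where "M = \<Lambda> + transpose \<Lambda>"
  have Mform: "x \<bullet> (M *v y) = x \<bullet> (\<Lambda> *v y) + y \<bullet> (\<Lambda> *v x)" for x y
    by (simp add: M_def matrix_vector_mult_add_rdistrib inner_add_right vmul_form)
  have Msym: "x \<bullet> (M *v y) = y \<bullet> (M *v x)" for x y by (simp add: Mform)
  have Mpd: "x \<bullet> (M *v x) > 0" if "x \<noteq> 0" for x
  proof -
    define v where "v = (1 / norm x) *\<^sub>R x"
    have nv: "norm v = 1" using that by (simp add: v_def)
    have xv: "x = norm x *\<^sub>R v" using that by (simp add: v_def)
    have "x \<bullet> (\<Lambda> *v x) = (norm x)^2 * (v \<bullet> (\<Lambda> *v v))"
      by (subst xv, subst xv) (simp add: matrix_vector_mult_scaleR power2_eq_square)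
    moreover have "v \<bullet> (\<Lambda> *v v) > 0" using unitpos[OF nv] by (simp add: outerp_inner)
    ultimately have "x \<bullet> (\<Lambda> *v x) > 0" using that by simp
    then show ?thesis by (simp add: Mform)
  qed
  define gg where "gg = (\<lambda>x y. x \<bullet> (M *v y))"
  have ggsym: "gg x y = gg y x" for x y by (simp add: gg_def Msym)
  have base: "gg (a i1 j1) (a i2 j2) = gg (a i1 j2) (a i2 j1)" if "i1 < i2" "j1 < j2" for i1 i2 j1 j2
  proof -
    have "(i1,i2,j1,j2) \<in> minor_idx" using that by (simp add: minor_idx_def)
    then have "\<Lambda> \<bullet> Sq (i1,i2,j1,j2) = 0" by (rule LSq)
    then show ?thesis
      by (simp add: Sq_def gg_def Mform inner_diff_right inner_add_right outerp_inner algebra_simps)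
  qed
  have G: "a i j \<bullet> (M *v a i' j') = a i j' \<bullet> (M *v a i' j)" for i i' j j'
  proof -
    have "gg (a i j) (a i' j') = gg (a i j') (a i' j)"
    proof (cases i i' rule: linorder_cases)
      case less
      show ?thesis
      proof (cases j j' rule: linorder_cases)
        case less with \<open>i < i'\<close> show ?thesis by (rule base)
      next
        case equal then show ?thesis by simp
      next
        case greater
        then have "gg (a i j') (a i' j) = gg (a i j) (a i' j')" using \<open>i < i'\<close> base by blast
        then show ?thesis by simp
      qed
    next
      case equal then show ?thesis using ggsym by simp
    next
      case greater
      show ?thesis
      proof (cases j j' rule: linorder_cases)
        case less
        then have "gg (a i' j) (a i j') = gg (a i' j') (a i j)" using \<open>i > i'\<close> base by blast
        then show ?thesis using ggsym by metis
      next
        case equal then show ?thesis by simp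
      next
        case greater
        then have "gg (a i' j') (a i j) = gg (a i' j) (a i j')" using \<open>i > i'\<close> base by blast
        then show ?thesis using ggsym by metis
      qed
    qed
    then show ?thesis by (simp add: gg_def)
  qed
  have conclude: False if X: "X = PK a (M *v y)" and nz: "X \<noteq> 0" and r1: "rank X \<le> 1" for y X
  proof -
    have "rank X \<noteq> 0" using nz by (simp add: rank_eq_0)
    then have r: "rank (X - 0) = 1" using r1 by simp
    have "X \<in> K" using X K_def by simp
    moreover have "0 \<in> K" using sub by (rule subspace_0)
    ultimately have "has_rank1_connections K"
      unfolding has_rank1_connections_def using nz r by blast
    then show False using norank1 by simp
  qed
  from span2 show False
  proof
    assume "\<exists>i0. dim (range (a i0)) = 2"
    then obtain i0 where i0: "dim (range (a i0)) = 2" by blast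
    obtain y where nz: "\<exists>i j. a i j \<bullet> (M *v y) \<noteq> 0"
      and r1: "\<exists>r. \<forall>i. \<exists>c. \<forall>j. a i j \<bullet> (M *v y) = c * r j"
      using geo_main[of M a i0, OF d Msym Mpd G i0] by blast
    define X where "X = PK a (M *v y)"
    obtain r where r: "\<forall>i. \<exists>c. \<forall>j. a i j \<bullet> (M *v y) = c * r j" using r1 by blast
    have "rank X \<le> 1"
      by (rule rank_le1_rows[of X "\<chi> j. r j"]) (use r in \<open>simp add: X_def PKc\<close>)
    moreover have "X \<noteq> 0" using nz by (auto simp: X_def PKc vec_eq_iff)
    ultimately show False using conclude X_def by blast
  next
    assume "\<exists>j0. dim (range (\<lambda>l. a l j0)) = 2"
    then obtain j0 where j0: "dim (range (\<lambda>l. a l j0)) = 2" by blast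
    define a' where "a' = (\<lambda>j i. a i j)"
    have G': "a' j i \<bullet> (M *v a' j' i') = a' j i' \<bullet> (M *v a' j' i)" for i i' j j'
      unfolding a'_def using G[of i j i' j'] Msym by metis
    obtain y where nz: "\<exists>j i. a' j i \<bullet> (M *v y) \<noteq> 0"
      and r1: "\<exists>r. \<forall>j. \<exists>c. \<forall>i. a' j i \<bullet> (M *v y) = c * r i"
      using geo_main[of M a' j0, OF d Msym Mpd G'] j0 unfolding a'_def by blast
    define X where "X = PK a (M *v y)"
    obtain r where r: "\<forall>j. \<exists>c. \<forall>i. a i j \<bullet> (M *v y) = c * r i" using r1 unfolding a'_def by blast
    have "rank (transpose X) \<le> 1"
      by (rule rank_le1_rows[of "transpose X" "\<chi> i. r i"]) (use r in \<open>simp add: X_def PKc transpose_def\<close>)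
    then have "rank X \<le> 1" by (simp add: rank_transpose)
    moreover have "X \<noteq> 0" using nz by (auto simp: X_def PKc vec_eq_iff a'_def)
    ultimately show False using conclude X_def by blast
  qed
qed

end
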